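(* Let $\mathrm{Bu}=\beta(B_3)$ and $\Delta=(\sigma_1\sigma_2\sigma_1)^2\in B_3$. The restriction $\overline{\rho}|_{\mathrm{Bu}}:\mathrm{Bu}\to\mathrm{PSL}(2,\mathbb{Z})$ is surjective and its kernel is the center $Z(\mathrm{Bu})$, which is infinite cyclic generated by $\beta(\Delta)$. In other words, $\overline{\rho}$ induces a short exact sequence $1\to\mathbb{Z}\to\mathrm{Bu}\to\mathrm{PSL}(2,\mathbb{Z})\to1$.
   Context: Let $B_3$ be the braid group on three strands with standard generators $\sigma_1,\sigma_2$, and $\beta:B_3\to\mathrm{GL}(3,\mathbb{Z}[t,t^{-1}])$ the Burau representation $\beta(\sigma_1)=\begin{pmatrix}1-t&t&0\\1&0&0\\0&0&1\end{pmatrix}$, $\beta(\sigma_2)=\begin{pmatrix}1&0&0\\0&1-t&t\\0&1&0\end{pmatrix}$. For $A\in\mathrm{Bu}$, let $B=A|_{t=-1}\in\mathrm{GL}(3,\mathbb{Z})$ and $\rho(B)=\begin{pmatrix}1-B_{13}&1-B_{11}\\1-B_{33}&1-B_{31}\end{pmatrix}\in\mathrm{GL}(2,\mathbb{Z})$; $\overline{\rho}(A)$ is the image of $\rho(B)$ in the projective linear group $\mathrm{PGL}(2,\mathbb{Q}(t))$ (quotient by nonzero scalars). $\mathrm{PSL}(2,\mathbb{Z})$ is identified with the image of $\mathrm{SL}(2,\mathbb{Z})$ there. *)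

theory Defs
  imports "HOL-Analysis.Analysis" "HOL-Computational_Algebra.Formal_Laurent_Series"
    "HOL-Computational_Algebra.Fraction_Field" "HOL-Computational_Algebra.Polynomial"
begin

text \<open>Laurent polynomials Z[t,t^-1] are represented inside the ring of integer formal
Laurent series; t is fls_X and t^-1 is fls_X_inv.  3x3 matrices are int fls ^3^3, indexed
1,2,3 (row index first).\<close>

type_synonym lpoly = "int fls"

definition tL :: lpoly where "tL = fls_X"
definition tLinv :: lpoly where "tLinv = fls_X_inv"

definition mat3 :: "'a::zero \<Rightarrow> 'a \<Rightarrow> 'a \<Rightarrow> 'a \<Rightarrow> 'a \<Rightarrow> 'a \<Rightarrow> 'a \<Rightarrow> 'a \<Rightarrow> 'a \<Rightarrow> 'a^3^3" where
  "mat3 a b c d e f g h i = vector [vector [a,b,c], vector [d,e,f], vector [g,h,i]]"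

definition mat2 :: "'a::zero \<Rightarrow> 'a \<Rightarrow> 'a \<Rightarrow> 'a \<Rightarrow> 'a^2^2" where
  "mat2 a b c d = vector [vector [a,b], vector [c,d]]"

text \<open>Burau images of the generators and of their inverses.\<close>
definition bs1 :: "lpoly^3^3" where "bs1 = mat3 (1 - tL) tL 0  1 0 0  0 0 1"
definition bs2 :: "lpoly^3^3" where "bs2 = mat3 1 0 0  0 (1 - tL) tL  0 1 0"
definition bs1inv :: "lpoly^3^3" where "bs1inv = mat3 0 1 0  tLinv (1 - tLinv) 0  0 0 1"
definition bs2inv :: "lpoly^3^3" where "bs2inv = mat3 1 0 0  0 0 1  0 tLinv (1 - tLinv)"

text \<open>Bu = beta(B_3): the subgroup generated by the images of the generators, i.e. the set of
all products of words in the generators and their inverses.\<close>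
inductive_set Bu :: "(lpoly^3^3) set" where
  Bu_one: "mat 1 \<in> Bu"
| Bu_mult: "A \<in> Bu \<Longrightarrow> g \<in> {bs1, bs2, bs1inv, bs2inv} \<Longrightarrow> g ** A \<in> Bu"

definition center_Bu :: "(lpoly^3^3) set" where
  "center_Bu = {A \<in> Bu. \<forall>B \<in> Bu. A ** B = B ** A}"

text \<open>beta(Delta), Delta = (s1 s2 s1)^2, and beta(Delta^-1).\<close>
definition bDelta :: "lpoly^3^3" where
  "bDelta = bs1 ** bs2 ** bs1 ** bs1 ** bs2 ** bs1"
definition bDelta_inv :: "lpoly^3^3" where
  "bDelta_inv = bs1inv ** bs2inv ** bs1inv ** bs1inv ** bs2inv ** bs1inv"

text \<open>Integer powers beta(Delta)^k.\<close>
definition bDelta_pow :: "int \<Rightarrow> lpoly^3^3" where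
  "bDelta_pow k = (if 0 \<le> k then (((**) bDelta) ^^ nat k) (mat 1)
                   else (((**) bDelta_inv) ^^ nat (- k)) (mat 1))"

text \<open>Evaluation of a Laurent polynomial at t = -1.\<close>
definition eval_m1 :: "lpoly \<Rightarrow> int" where
  "eval_m1 f = (\<Sum>n \<in> {n. fls_nth f n \<noteq> 0}. (if even n then 1 else -1) * fls_nth f n)"

definition spec_m1 :: "lpoly^3^3 \<Rightarrow> int^3^3" where
  "spec_m1 A = (\<chi> i j. eval_m1 (A $ i $ j))"

text \<open>rho(B) = ((1-B13, 1-B11), (1-B33, 1-B31)).\<close>
definition rho :: "int^3^3 \<Rightarrow> int^2^2" where
  "rho B = mat2 (1 - B$1$3) (1 - B$1$1) (1 - B$3$3) (1 - B$3$1)"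

text \<open>Equality of the images in PGL(2, Q(t)): equal up to a nonzero scalar of Q(t).\<close>
definition proj_eq :: "int^2^2 \<Rightarrow> int^2^2 \<Rightarrow> bool" where
  "proj_eq M N \<longleftrightarrow> (\<exists>c :: rat poly fract. c \<noteq> 0 \<and>
      (\<forall>i j. (of_int (M $ i $ j) :: rat poly fract) = c * of_int (N $ i $ j)))"

definition rhobar_in_PSL :: "int^2^2 \<Rightarrow> bool" where
  "rhobar_in_PSL M \<longleftrightarrow> (\<exists>N :: int^2^2. det N = 1 \<and> proj_eq M N)"

end

theory Submission
  imports Defs
begin

no_notation fps_nth (infixl \<open>$\<close> 75)


lemma mat3_nth[simp]:
  "mat3 a b c d e f g h i $ 1 $ 1 = a" "mat3 a b c d e f g h i $ 1 $ 2 = b" "mat3 a b c d e f g h i $ 1 $ 3 = c"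
  "mat3 a b c d e f g h i $ 2 $ 1 = d" "mat3 a b c d e f g h i $ 2 $ 2 = e" "mat3 a b c d e f g h i $ 2 $ 3 = f"
  "mat3 a b c d e f g h i $ 3 $ 1 = g" "mat3 a b c d e f g h i $ 3 $ 2 = h" "mat3 a b c d e f g h i $ 3 $ 3 = i"
  by (simp_all add: mat3_def)

lemma mat3_expand: "(A::'a::zero^3^3) = mat3 (A$1$1) (A$1$2) (A$1$3) (A$2$1) (A$2$2) (A$2$3) (A$3$1) (A$3$2) (A$3$3)"
  by (simp add: vec_eq_iff forall_3)

lemma mat3_eq_iff: "(mat3 a b c d e f g h i = mat3 a' b' c' d' e' f' g' h' i') \<longleftrightarrow>
   a = a' \<and> b = b' \<and> c = c' \<and> d = d' \<and> e = e' \<and> f = f' \<and> g = g' \<and> h = h' \<and> i = i'"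
  by (auto simp: vec_eq_iff forall_3)

lemma mat3_mult: "mat3 a b c d e f g h i ** mat3 a' b' c' d' e' f' g' h' i' =
  mat3 (a*a'+b*d'+c*g') (a*b'+b*e'+c*h') (a*c'+b*f'+c*i')
       (d*a'+e*d'+f*g') (d*b'+e*e'+f*h') (d*c'+e*f'+f*i')
       (g*a'+h*d'+i*g') (g*b'+h*e'+i*h') (g*c'+h*f'+i*i')"
  by (simp add: vec_eq_iff forall_3 matrix_matrix_mult_def sum_3)

lemma mat3_one: "(mat 1 :: 'a::{zero,one}^3^3) = mat3 1 0 0 0 1 0 0 0 1"
  by (simp add: vec_eq_iff forall_3 mat_def)

lemma mat3_mult_nth: "(mat3 a b c d e f g h i ** X) $ 1 $ j = a * X$1$j + b * X$2$j + c * X$3$j"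
  "(mat3 a b c d e f g h i ** X) $ 2 $ j = d * X$1$j + e * X$2$j + f * X$3$j"
  "(mat3 a b c d e f g h i ** X) $ 3 $ j = g * X$1$j + h * X$2$j + i * X$3$j"
  by (simp_all add: matrix_matrix_mult_def sum_3)

lemma tL_tLinv[simp]: "tL * tLinv = 1" "tLinv * tL = 1"
  by (simp_all add: tL_def tLinv_def fls_X_times_conv_shift)

lemma inv1[simp]: "bs1 ** bs1inv = mat 1" "bs1inv ** bs1 = mat 1"
  "bs2 ** bs2inv = mat 1" "bs2inv ** bs2 = mat 1"
  by (simp_all add: bs1_def bs1inv_def bs2_def bs2inv_def mat3_mult mat3_one algebra_simps)

lemma braid: "bs1 ** bs2 ** bs1 = bs2 ** bs1 ** bs2"
  by (simp add: bs1_def bs2_def mat3_mult algebra_simps)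


lemmas mma = matrix_mul_assoc

lemma inv1'[simp]: "bs1 ** (bs1inv ** X) = X" "bs1inv ** (bs1 ** X) = X"
  "bs2 ** (bs2inv ** X) = X" "bs2inv ** (bs2 ** X) = X"
  by (simp_all add: mma)

lemma braid': "bs1 ** (bs2 ** (bs1 ** X)) = bs2 ** (bs1 ** (bs2 ** X))"
  using braid by (simp add: mma)
lemma braid'': "bs1 ** (bs2 ** bs1) = bs2 ** (bs1 ** bs2)"
  using braid by (simp add: mma)

definition "uu = bs1 ** bs2 ** bs1"
definition "vv = bs1 ** bs2"
definition "vi = bs2inv ** bs1inv"

lemma Delta_uu: "bDelta = uu ** uu" unfolding bDelta_def uu_def by (simp add: mma[symmetric])

lemma s1_uu: "bs1 ** uu = uu ** bs2" unfolding uu_def by (simp add: mma[symmetric] braid' braid'')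
lemma s2_uu: "bs2 ** uu = uu ** bs1" unfolding uu_def by (simp add: mma[symmetric] braid' braid'')

lemma s1_D: "bs1 ** bDelta = bDelta ** bs1"
proof -
  have "bs1 ** (uu ** uu) = (bs1 ** uu) ** uu" by (rule mma)
  also have "... = uu ** (bs2 ** uu)" by (simp add: s1_uu mma)
  also have "... = (uu ** uu) ** bs1" by (simp add: s2_uu mma)
  finally show ?thesis unfolding Delta_uu .
qed
lemma s2_D: "bs2 ** bDelta = bDelta ** bs2"
proof -
  have "bs2 ** (uu ** uu) = (bs2 ** uu) ** uu" by (rule mma)
  also have "... = uu ** (bs1 ** uu)" by (simp add: s2_uu mma)
  also have "... = (uu ** uu) ** bs2" by (simp add: s1_uu mma)
  finally show ?thesis unfolding Delta_uu .
qed

lemma comm_inv: assumes "g ** h = mat 1" "h ** g = mat 1" "g ** D = D ** g"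
  shows "h ** D = D ** h"
proof -
  have "h ** D = h ** D ** (g ** h)" using assms by simp
  also have "... = h ** (g ** D) ** h" using assms(3) by (simp add: mma[symmetric])
  also have "... = D ** h" using assms(2) by (simp add: mma)
  finally show ?thesis .
qed

lemma Dinv_D[simp]: "bDelta_inv ** bDelta = mat 1" "bDelta ** bDelta_inv = mat 1"
  unfolding bDelta_def bDelta_inv_def by (simp_all add: mma[symmetric])

lemma Dinv_D'[simp]: "bDelta_inv ** (bDelta ** X) = X" "bDelta ** (bDelta_inv ** X) = X"
  by (simp_all add: mma)

lemma Bu_gen: "g \<in> {bs1, bs2, bs1inv, bs2inv} \<Longrightarrow> g \<in> Bu"
  using Bu_mult[OF Bu_one] by auto

lemma Bu_mul: "A \<in> Bu \<Longrightarrow> B \<in> Bu \<Longrightarrow> A ** B \<in> Bu"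
proof (induction A rule: Bu.induct)
  case Bu_one then show ?case by simp
next
  case (Bu_mult A g)
  have "g ** A ** B = g ** (A ** B)" by (simp add: mma)
  then show ?case using Bu_mult by (simp add: Bu.Bu_mult)
qed

lemma D_comm_gen: "g \<in> {bs1, bs2, bs1inv, bs2inv} \<Longrightarrow> g ** bDelta = bDelta ** g"
proof -
  assume "g \<in> {bs1, bs2, bs1inv, bs2inv}"
  then consider "g = bs1" | "g = bs2" | "g = bs1inv" | "g = bs2inv" by blast
  then show ?thesis
    using s1_D s2_D comm_inv[OF inv1(1) inv1(2) s1_D] comm_inv[OF inv1(3) inv1(4) s2_D] by cases simp_all
qed

lemma D_comm: "A \<in> Bu \<Longrightarrow> A ** bDelta = bDelta ** A"
proof (induction A rule: Bu.induct)
  case Bu_one then show ?case by simp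
next
  case (Bu_mult A g)
  have "g ** A ** bDelta = g ** (A ** bDelta)" by (simp add: mma)
  also have "... = (g ** bDelta) ** A" using Bu_mult by (simp add: mma)
  also have "... = bDelta ** (g ** A)" using D_comm_gen[OF Bu_mult(2)] by (simp add: mma)
  finally show ?case .
qed

lemma Dinv_comm: "A \<in> Bu \<Longrightarrow> A ** bDelta_inv = bDelta_inv ** A"
proof -
  assume "A \<in> Bu"
  then have "bDelta ** A = A ** bDelta" using D_comm by simp
  then show ?thesis using comm_inv[OF Dinv_D(2) Dinv_D(1), of A] by simp
qed

lemma D_Bu: "bDelta \<in> Bu" "bDelta_inv \<in> Bu"
  unfolding bDelta_def bDelta_inv_def by (simp_all add: Bu_mul Bu_gen)

lemma Dpow_nonneg: "bDelta_pow (int n) = ((**) bDelta ^^ n) (mat 1)"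
  by (simp add: bDelta_pow_def)
lemma Dpow_neg: "bDelta_pow (- int n) = ((**) bDelta_inv ^^ n) (mat 1)"
proof (cases n)
  case (Suc m)
  have "\<not> 0 \<le> - int n" "nat (- (- int n)) = n" using Suc by simp_all
  then show ?thesis unfolding bDelta_pow_def by (simp only: if_False)
qed (simp add: bDelta_pow_def)

lemma Dpow_succ: "bDelta_pow (k + 1) = bDelta ** bDelta_pow k"
proof (cases "k \<ge> 0")
  case True
  then obtain n where k: "k = int n" by (metis nonneg_eq_int)
  have e: "int n + 1 = int (Suc n)" by simp
  show ?thesis unfolding k e Dpow_nonneg by simp
next
  case False
  then have "k < 0" by simp
  then obtain n0 where k0: "k = - int n0" "n0 > 0" by (rule neg_int_cases)
  then obtain n where "n0 = Suc n" using gr0_implies_Suc by blast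
  with k0 have k: "k = - int (Suc n)" by simp
  have e: "- int (Suc n) + 1 = - int n" by simp
  show ?thesis unfolding k e Dpow_neg by simp
qed

lemma Dpow_pred: "bDelta_pow (k - 1) = bDelta_inv ** bDelta_pow k"
  using Dpow_succ[of "k - 1"] by simp

lemma Dpow_add: "bDelta_pow (j + k) = bDelta_pow j ** bDelta_pow k"
proof (induction j rule: int_induct[where k=0])
  case base then show ?case by (simp add: bDelta_pow_def)
next
  case (step1 i)
  have "i + 1 + k = (i + k) + 1" by simp
  then have "bDelta_pow (i + 1 + k) = bDelta_pow ((i + k) + 1)" by (rule arg_cong)
  also have "... = bDelta ** (bDelta_pow i ** bDelta_pow k)" by (simp only: Dpow_succ step1(2))
  also have "... = bDelta_pow (i + 1) ** bDelta_pow k" by (simp only: Dpow_succ mma)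
  finally show ?case .
next
  case (step2 i)
  have "i - 1 + k = (i + k) - 1" by simp
  then have "bDelta_pow (i - 1 + k) = bDelta_pow ((i + k) - 1)" by (rule arg_cong)
  also have "... = bDelta_inv ** (bDelta_pow i ** bDelta_pow k)" by (simp only: Dpow_pred step2(2))
  also have "... = bDelta_pow (i - 1) ** bDelta_pow k" by (simp only: Dpow_pred mma)
  finally show ?case .
qed

lemma Dpow_Bu: "bDelta_pow k \<in> Bu"
proof (induction k rule: int_induct[where k=0])
  case base then show ?case by (simp add: bDelta_pow_def Bu_one)
next
  case (step1 i) then show ?case using Dpow_succ[of i] by (simp add: Bu_mul D_Bu)
next
  case (step2 i) then show ?case using Dpow_pred[of i] by (simp add: Bu_mul D_Bu)
qed

lemma Dpow_comm: assumes AB: "A \<in> Bu" shows "A ** bDelta_pow k = bDelta_pow k ** A"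
proof (induction k rule: int_induct[where k=0])
  case base then show ?case by (simp add: bDelta_pow_def)
next
  case (step1 i)
  have "A ** bDelta_pow (i + 1) = (A ** bDelta) ** bDelta_pow i" by (simp add: Dpow_succ mma)
  also have "... = bDelta ** (A ** bDelta_pow i)" using D_comm[OF AB] by (simp add: mma)
  also have "... = bDelta_pow (i + 1) ** A" using step1 by (simp add: Dpow_succ mma)
  finally show ?case .
next
  case (step2 i)
  have "A ** bDelta_pow (i - 1) = (A ** bDelta_inv) ** bDelta_pow i" by (simp add: Dpow_pred mma)
  also have "... = bDelta_inv ** (A ** bDelta_pow i)" using Dinv_comm[OF AB] by (simp add: mma)
  also have "... = bDelta_pow (i - 1) ** A" using step2 by (simp add: Dpow_pred mma)
  finally show ?case .
qed

lemma Dpow_1: "bDelta_pow 1 = bDelta" "bDelta_pow (-1) = bDelta_inv"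
  using Dpow_succ[of 0] Dpow_pred[of 0] by (simp_all add: bDelta_pow_def)



lemma uu_Bu: "uu \<in> Bu" "vv \<in> Bu" "vi \<in> Bu"
  unfolding uu_def vv_def vi_def by (simp_all add: Bu_mul Bu_gen)

lemma uu_alt: "uu = bs2 ** bs1 ** bs2" unfolding uu_def by (rule braid)

lemma uu_uu: "uu ** (uu ** X) = bDelta ** X" by (simp add: Delta_uu mma)

lemma Delta_vv: "bDelta = vv ** vv ** vv"
proof -
  have "bDelta = uu ** uu" by (rule Delta_uu)
  also have "... = (bs1 ** bs2 ** bs1) ** (bs2 ** bs1 ** bs2)" by (simp add: uu_def[symmetric] uu_alt[symmetric])
  also have "... = vv ** vv ** vv" unfolding vv_def by (simp add: mma)
  finally show ?thesis .
qed

lemma vv3: "vv ** (vv ** (vv ** X)) = bDelta ** X" by (simp add: Delta_vv mma)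
lemma v_vi[simp]: "vv ** (vi ** X) = X" "vi ** (vv ** X) = X"
  unfolding vv_def vi_def by (simp_all add: mma[symmetric])

lemma Dinv_cancel: "bDelta ** Y = Z \<Longrightarrow> Y = bDelta_inv ** Z"
  by auto

lemma vv_vv: "vv ** (vv ** X) = bDelta ** (vi ** X)"
  by (simp add: vv3[symmetric])
lemma vi_vi: "vi ** (vi ** X) = bDelta_inv ** (vv ** X)"
  by (rule Dinv_cancel) (simp add: vv3[symmetric])

lemma gen_s1: "bs1 ** X = vi ** (uu ** X)"
  unfolding vi_def uu_def by (simp add: mma[symmetric])
lemma gen_s2: "bs2 ** X = uu ** (vi ** X)"
  unfolding vi_def uu_alt by (simp add: mma[symmetric])
lemma gen_s1inv: "bs1inv ** X = bDelta_inv ** (uu ** (vv ** X))"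
  by (rule Dinv_cancel) (simp add: Delta_uu uu_def vv_def mma[symmetric])
lemma gen_s2inv: "bs2inv ** X = bDelta_inv ** (vv ** (uu ** X))"
  by (rule Dinv_cancel) (simp add: Delta_vv uu_def vv_def mma[symmetric])

datatype letter = LU | LV | LVi

fun lm :: "letter \<Rightarrow> lpoly^3^3" where
  "lm LU = uu" | "lm LV = vv" | "lm LVi = vi"

fun ev :: "letter list \<Rightarrow> lpoly^3^3" where
  "ev [] = mat 1" | "ev (l # w) = lm l ** ev w"

fun red :: "letter list \<Rightarrow> bool" where
  "red [] = True" | "red [x] = True"
| "red (x # y # w) = ((x = LU) \<noteq> (y = LU) \<and> red (y # w))"

lemma red_tl: "red (x # w) \<Longrightarrow> red w"
  by (cases w) auto

lemma red_swap: "red (LV # w) = red (LVi # w)"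
  by (cases w) auto

lemma lm_Bu: "lm l \<in> Bu" by (cases l) (simp_all add: uu_Bu)

definition NFP :: "lpoly^3^3 \<Rightarrow> bool" where
  "NFP X \<longleftrightarrow> (\<exists>j w. red w \<and> X = bDelta_pow j ** ev w)"

lemma NFP_I: "red w \<Longrightarrow> X = bDelta_pow j ** ev w \<Longrightarrow> NFP X"
  unfolding NFP_def by blast

lemma NFP_D: "NFP X \<Longrightarrow> NFP (bDelta_pow c ** X)"
  unfolding NFP_def by (metis Dpow_add mma)

lemma Dpow0: "bDelta_pow 0 = mat 1" by (simp add: bDelta_pow_def)

lemma NFP_letter: assumes "red w" shows "NFP (lm l ** ev w)"
proof (cases l)
  case LU
  show ?thesis
  proof (cases w)
    case Nil then show ?thesis using LU by (intro NFP_I[of "[LU]" _ 0]) (simp_all add: Dpow0)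
  next
    case (Cons y w')
    show ?thesis
    proof (cases y)
      case LU
      have "lm l ** ev w = bDelta_pow 1 ** ev w'" using `l = LU` Cons LU by (simp add: uu_uu Dpow_1)
      then show ?thesis using red_tl assms Cons by (intro NFP_I) auto
    next
      case LV then show ?thesis using `l = LU` Cons assms by (intro NFP_I[of "LU # w" _ 0]) (simp_all add: Dpow0)
    next
      case LVi then show ?thesis using `l = LU` Cons assms by (intro NFP_I[of "LU # w" _ 0]) (simp_all add: Dpow0)
    qed
  qed
next
  case LV
  show ?thesis
  proof (cases w)
    case Nil then show ?thesis using LV by (intro NFP_I[of "[LV]" _ 0]) (simp_all add: Dpow0)
  next
    case (Cons y w')
    show ?thesis
    proof (cases y)
      case LU then show ?thesis using `l = LV` Cons assms by (intro NFP_I[of "LV # w" _ 0]) (simp_all add: Dpow0)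
    next
      case LV
      have "lm l ** ev w = bDelta_pow 1 ** ev (LVi # w')" using `l = LV` Cons LV by (simp add: vv_vv Dpow_1)
      moreover have "red (LVi # w')" using assms Cons LV red_swap by simp
      ultimately show ?thesis by (intro NFP_I)
    next
      case LVi
      have "lm l ** ev w = bDelta_pow 0 ** ev w'" using `l = LV` Cons LVi by (simp add: Dpow0)
      then show ?thesis using red_tl assms Cons by (intro NFP_I) auto
    qed
  qed
next
  case LVi
  show ?thesis
  proof (cases w)
    case Nil then show ?thesis using LVi by (intro NFP_I[of "[LVi]" _ 0]) (simp_all add: Dpow0)
  next
    case (Cons y w')
    show ?thesis
    proof (cases y)
      case LU then show ?thesis using `l = LVi` Cons assms by (intro NFP_I[of "LVi # w" _ 0]) (simp_all add: Dpow0)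
    next
      case LVi
      have "lm l ** ev w = bDelta_pow (-1) ** ev (LV # w')" using `l = LVi` Cons LVi by (simp add: vi_vi Dpow_1)
      moreover have "red (LV # w')" using assms Cons LVi red_swap by simp
      ultimately show ?thesis by (intro NFP_I)
    next
      case LV
      have "lm l ** ev w = bDelta_pow 0 ** ev w'" using `l = LVi` Cons LV by (simp add: Dpow0)
      then show ?thesis using red_tl assms Cons by (intro NFP_I) auto
    qed
  qed
qed

lemma NFP_l: assumes "NFP X" shows "NFP (lm l ** X)"
proof -
  obtain j w where jw: "red w" "X = bDelta_pow j ** ev w" using assms unfolding NFP_def by blast
  have "lm l ** X = bDelta_pow j ** (lm l ** ev w)"
    using jw(2) Dpow_comm[OF lm_Bu[of l], of j] by (simp add: mma)
  then show ?thesis using NFP_D[OF NFP_letter[OF jw(1)]] by simp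
qed

lemma NFP_lU: "NFP X \<Longrightarrow> NFP (uu ** X)" using NFP_l[of X LU] by simp
lemma NFP_lV: "NFP X \<Longrightarrow> NFP (vv ** X)" using NFP_l[of X LV] by simp
lemma NFP_lVi: "NFP X \<Longrightarrow> NFP (vi ** X)" using NFP_l[of X LVi] by simp

lemma NFP_Bu: "A \<in> Bu \<Longrightarrow> NFP A"
proof (induction A rule: Bu.induct)
  case Bu_one
  then show ?case by (intro NFP_I[of "[]" _ 0]) (simp_all add: Dpow0)
next
  case (Bu_mult A g)
  then consider "g = bs1" | "g = bs2" | "g = bs1inv" | "g = bs2inv" by blast
  then show ?case
  proof cases
    case 1 then show ?thesis using Bu_mult by (simp add: gen_s1 NFP_lU NFP_lVi)
  next
    case 2 then show ?thesis using Bu_mult by (simp add: gen_s2 NFP_lU NFP_lVi)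
  next
    case 3 then show ?thesis using Bu_mult NFP_D[of _ "-1"] by (simp add: gen_s1inv NFP_lU NFP_lV Dpow_1)
  next
    case 4 then show ?thesis using Bu_mult NFP_D[of _ "-1"] by (simp add: gen_s2inv NFP_lU NFP_lV Dpow_1)
  qed
qed

lemma ev_Bu: "ev w \<in> Bu"
  by (induction w) (simp_all add: Bu_one Bu_mul lm_Bu)



definition fin :: "lpoly \<Rightarrow> bool" where "fin f \<longleftrightarrow> finite {n. fls_nth f n \<noteq> 0}"
definition sg :: "int \<Rightarrow> int" where "sg n = (if even n then 1 else -1)"

lemma eval_on: assumes "finite S" "{n. fls_nth f n \<noteq> 0} \<subseteq> S"
  shows "eval_m1 f = (\<Sum>n\<in>S. sg n * fls_nth f n)"
  unfolding eval_m1_def sg_def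
  by (rule sum.mono_neutral_left) (use assms in auto)

lemma fin_add[simp]: "fin f \<Longrightarrow> fin g \<Longrightarrow> fin (f + g)"
  unfolding fin_def by (rule finite_subset[of _ "{n. fls_nth f n \<noteq> 0} \<union> {n. fls_nth g n \<noteq> 0}"]) auto
lemma fin_diff[simp]: "fin f \<Longrightarrow> fin g \<Longrightarrow> fin (f - g)"
  unfolding fin_def by (rule finite_subset[of _ "{n. fls_nth f n \<noteq> 0} \<union> {n. fls_nth g n \<noteq> 0}"]) auto
lemma fin_0[simp]: "fin 0" unfolding fin_def by simp
lemma fin_1[simp]: "fin 1" unfolding fin_def by (rule finite_subset[of _ "{0}"]) auto
lemma shift_supp: "{n. fls_nth f (n + m) \<noteq> 0} = (\<lambda>k. k - m) ` {n. fls_nth f n \<noteq> 0}"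
proof (intro set_eqI iffI)
  fix x assume "x \<in> {n. fls_nth f (n + m) \<noteq> 0}"
  then show "x \<in> (\<lambda>k. k - m) ` {n. fls_nth f n \<noteq> 0}" by (intro image_eqI[of x _ "x + m"]) auto
qed auto

lemma fin_shift: "fin f \<Longrightarrow> fin (fls_shift m f)"
  unfolding fin_def by (simp add: shift_supp)

lemma eval_add: assumes "fin f" "fin g" shows "eval_m1 (f + g) = eval_m1 f + eval_m1 g"
proof -
  let ?S = "{n. fls_nth f n \<noteq> 0} \<union> {n. fls_nth g n \<noteq> 0}"
  have "finite ?S" using assms unfolding fin_def by simp
  then have "eval_m1 (f + g) = (\<Sum>n\<in>?S. sg n * fls_nth (f + g) n)"
    "eval_m1 f = (\<Sum>n\<in>?S. sg n * fls_nth f n)" "eval_m1 g = (\<Sum>n\<in>?S. sg n * fls_nth g n)"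
    by (rule eval_on; auto)+
  then show ?thesis by (simp add: sum.distrib algebra_simps)
qed

lemma eval_diff: assumes "fin f" "fin g" shows "eval_m1 (f - g) = eval_m1 f - eval_m1 g"
proof -
  let ?S = "{n. fls_nth f n \<noteq> 0} \<union> {n. fls_nth g n \<noteq> 0}"
  have "finite ?S" using assms unfolding fin_def by simp
  then have "eval_m1 (f - g) = (\<Sum>n\<in>?S. sg n * fls_nth (f - g) n)"
    "eval_m1 f = (\<Sum>n\<in>?S. sg n * fls_nth f n)" "eval_m1 g = (\<Sum>n\<in>?S. sg n * fls_nth g n)"
    by (rule eval_on; auto)+
  then show ?thesis by (simp add: sum_subtractf algebra_simps)
qed

lemma sg_diff: "sg (k - m) = sg k * sg m"
  unfolding sg_def by auto

lemma eval_shift: assumes "fin f" shows "eval_m1 (fls_shift m f) = sg m * eval_m1 f"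
proof -
  let ?S = "{n. fls_nth f n \<noteq> 0}"
  have fS: "finite ?S" using assms unfolding fin_def by simp
  have "eval_m1 (fls_shift m f) = (\<Sum>n\<in>(\<lambda>k. k - m) ` ?S. sg n * fls_nth (fls_shift m f) n)"
    using fS by (intro eval_on) (auto simp: shift_supp)
  also have "... = (\<Sum>k\<in>?S. sg (k - m) * fls_nth f k)"
    by (subst sum.reindex) (auto simp: inj_on_def)
  also have "... = sg m * (\<Sum>k\<in>?S. sg k * fls_nth f k)"
    by (simp add: sg_diff sum_distrib_left algebra_simps)
  also have "... = sg m * eval_m1 f" unfolding eval_m1_def sg_def by simp
  finally show ?thesis .
qed

lemma eval_0[simp]: "eval_m1 0 = 0" unfolding eval_m1_def by simp
lemma eval_1[simp]: "eval_m1 1 = 1"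
proof -
  have "eval_m1 1 = (\<Sum>n\<in>{0}. sg n * fls_nth (1::lpoly) n)" by (rule eval_on) auto
  then show ?thesis by (simp add: sg_def)
qed

lemma tL_mult: "tL * x = fls_shift (-1) x" unfolding tL_def by (simp add: fls_X_times_conv_shift)
lemma tLinv_mult: "tLinv * x = fls_shift 1 x" unfolding tLinv_def by (simp add: fls_X_inv_times_conv_shift)

lemma sg_m1: "sg (-1) = -1" "sg 1 = -1" by (simp_all add: sg_def)

lemma fin_tL[simp]: "fin x \<Longrightarrow> fin (tL * x)" "fin x \<Longrightarrow> fin (tLinv * x)"
  by (simp_all add: tL_mult tLinv_mult fin_shift)

lemma eval_tL: "fin x \<Longrightarrow> eval_m1 (tL * x) = - eval_m1 x" "fin x \<Longrightarrow> eval_m1 (tLinv * x) = - eval_m1 x"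
  by (simp_all add: tL_mult tLinv_mult eval_shift sg_m1)

lemma fin_tL1[simp]: "fin tL" "fin tLinv" using fin_tL[OF fin_1] by simp_all
lemma eval_tL1[simp]: "eval_m1 tL = -1" "eval_m1 tLinv = -1" using eval_tL[OF fin_1] by simp_all
lemma eval_1tL[simp]: "eval_m1 (1 - tL) = 2" "eval_m1 (1 - tLinv) = 2"
  by (simp_all add: eval_diff)

definition "Ent = {0, 1, tL, tLinv, 1 - tL, 1 - tLinv}"

lemma ent_mult: assumes "c \<in> Ent" "fin x"
  shows "fin (c * x) \<and> eval_m1 (c * x) = eval_m1 c * eval_m1 x"
proof -
  have fx: "fin (tL * x)" "fin (tLinv * x)" using assms(2) by simp_all
  show ?thesis using assms fx unfolding Ent_def
    by (auto simp: eval_tL left_diff_distrib eval_diff)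
qed

lemma ent_sum: assumes "a \<in> Ent" "b \<in> Ent" "c \<in> Ent" "fin x" "fin y" "fin z"
  shows "fin (a * x + b * y + c * z) \<and>
    eval_m1 (a * x + b * y + c * z) = eval_m1 a * eval_m1 x + eval_m1 b * eval_m1 y + eval_m1 c * eval_m1 z"
  using ent_mult[OF assms(1,4)] ent_mult[OF assms(2,5)] ent_mult[OF assms(3,6)]
  by (simp add: eval_add)

definition finM :: "lpoly^3^3 \<Rightarrow> bool" where "finM X \<longleftrightarrow> (\<forall>i j. fin (X $ i $ j))"

lemma spec_gen:
  assumes "a \<in> Ent" "b \<in> Ent" "c \<in> Ent" "d \<in> Ent" "e \<in> Ent" "f \<in> Ent" "g \<in> Ent" "h \<in> Ent" "i \<in> Ent"
    and X: "finM X"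
  shows "finM (mat3 a b c d e f g h i ** X) \<and>
    spec_m1 (mat3 a b c d e f g h i ** X) = spec_m1 (mat3 a b c d e f g h i) ** spec_m1 X"
proof -
  have fx: "\<And>r s. fin (X $ r $ s)" using X unfolding finM_def by blast
  note E = ent_sum[OF assms(1-3) fx fx fx] ent_sum[OF assms(4-6) fx fx fx] ent_sum[OF assms(7-9) fx fx fx]
  show ?thesis unfolding finM_def
    by (auto simp: forall_3 vec_eq_iff mat3_mult_nth spec_m1_def matrix_matrix_mult_def sum_3 E)
qed

lemma gens_mat3:
  "bs1 = mat3 (1 - tL) tL 0  1 0 0  0 0 1" "bs2 = mat3 1 0 0  0 (1 - tL) tL  0 1 0"
  "bs1inv = mat3 0 1 0  tLinv (1 - tLinv) 0  0 0 1" "bs2inv = mat3 1 0 0  0 0 1  0 tLinv (1 - tLinv)"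
  by (simp_all add: bs1_def bs2_def bs1inv_def bs2inv_def)

lemma spec_gen2: assumes "g \<in> {bs1, bs2, bs1inv, bs2inv}" "finM X"
  shows "finM (g ** X) \<and> spec_m1 (g ** X) = spec_m1 g ** spec_m1 X"
proof -
  have E: "0 \<in> Ent" "1 \<in> Ent" "tL \<in> Ent" "tLinv \<in> Ent" "1 - tL \<in> Ent" "1 - tLinv \<in> Ent"
    unfolding Ent_def by simp_all
  from assms(1) consider "g = bs1" | "g = bs2" | "g = bs1inv" | "g = bs2inv" by blast
  then show ?thesis
    by cases (simp_all only: gens_mat3; rule spec_gen; (rule E assms)?)+
qed

lemma finM_one: "finM (mat 1)" unfolding finM_def mat_def by simp

lemma finM_Bu: "A \<in> Bu \<Longrightarrow> finM A"
  by (induction A rule: Bu.induct) (simp_all add: finM_one spec_gen2)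

lemma spec_mult: "g \<in> {bs1, bs2, bs1inv, bs2inv} \<Longrightarrow> A \<in> Bu \<Longrightarrow> spec_m1 (g ** A) = spec_m1 g ** spec_m1 A"
  using spec_gen2 finM_Bu by blast

lemma spec_one: "spec_m1 (mat 1) = mat 1"
  by (simp add: spec_m1_def mat_def vec_eq_iff)

lemma spec_gens: "spec_m1 bs1 = mat3 2 (-1) 0 1 0 0 0 0 1"
  "spec_m1 bs2 = mat3 1 0 0 0 2 (-1) 0 1 0"
  "spec_m1 bs1inv = mat3 0 1 0 (-1) 2 0 0 0 1"
  "spec_m1 bs2inv = mat3 1 0 0 0 0 1 0 (-1) 2"
  by (simp_all add: gens_mat3 spec_m1_def vec_eq_iff forall_3)



lemma mat2_nth[simp]:
  "mat2 a b c d $ 1 $ 1 = a" "mat2 a b c d $ 1 $ 2 = b"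
  "mat2 a b c d $ 2 $ 1 = c" "mat2 a b c d $ 2 $ 2 = d"
  by (simp_all add: mat2_def)

lemma mat2_expand: "(A::'a::zero^2^2) = mat2 (A$1$1) (A$1$2) (A$2$1) (A$2$2)"
  by (simp add: vec_eq_iff forall_2)

lemma mat2_eq_iff: "(mat2 a b c d = mat2 a' b' c' d') \<longleftrightarrow> a = a' \<and> b = b' \<and> c = c' \<and> d = d'"
  by (auto simp: vec_eq_iff forall_2)

lemma mat2_mult: "mat2 a b c d ** mat2 a' b' c' d' =
  mat2 (a*a'+b*c') (a*b'+b*d') (c*a'+d*c') (c*b'+d*d')"
  by (simp add: vec_eq_iff forall_2 matrix_matrix_mult_def sum_2)

lemma mat2_one: "(mat 1 :: 'a::{zero,one}^2^2) = mat2 1 0 0 1"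
  by (simp add: vec_eq_iff forall_2 mat_def)

lemma mat2_uminus: "- mat2 a b c d = mat2 (-a) (-b) (-c) (-(d::'a::ab_group_add))"
  by (simp add: vec_eq_iff forall_2)

lemma mat2_det: "det (mat2 a b c (d::'a::comm_ring_1)) = a * d - b * c"
  by (simp add: det_2)

definition inv3 :: "int^3^3 \<Rightarrow> bool" where
  "inv3 M \<longleftrightarrow> M$1$1 + M$1$2 + M$1$3 = 1 \<and> M$2$1 + M$2$2 + M$2$3 = 1 \<and> M$3$1 + M$3$2 + M$3$3 = 1
     \<and> M$1$1 - M$2$1 + M$3$1 = 1 \<and> M$1$2 - M$2$2 + M$3$2 = -1 \<and> M$1$3 - M$2$3 + M$3$3 = 1"

lemma inv3_param: assumes "inv3 M"
  shows "M = mat3 (M$1$1) (1 - M$1$1 - M$1$3) (M$1$3) (M$1$1 + M$3$1 - 1)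
     (3 - M$1$1 - M$1$3 - M$3$1 - M$3$3) (M$1$3 + M$3$3 - 1) (M$3$1) (1 - M$3$1 - M$3$3) (M$3$3)"
  apply (subst mat3_expand)
  unfolding mat3_eq_iff using assms unfolding inv3_def by linarith

lemma inv3_mult: assumes "inv3 M" "inv3 N" shows "inv3 (M ** N)"
proof -
  obtain a b c d where M: "M = mat3 a (1 - a - b) b (a + c - 1) (3 - a - b - c - d) (b + d - 1) c (1 - c - d) d"
    using inv3_param[OF assms(1)] by blast
  obtain a' b' c' d' where N: "N = mat3 a' (1 - a' - b') b' (a' + c' - 1) (3 - a' - b' - c' - d') (b' + d' - 1) c' (1 - c' - d') d'"
    using inv3_param[OF assms(2)] by blast
  show ?thesis unfolding M N mat3_mult inv3_def mat3_nth by (simp add: algebra_simps)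
qed

lemma rho_mult: assumes "inv3 M" "inv3 N" shows "rho (M ** N) = rho M ** rho N"
proof -
  obtain a b c d where M: "M = mat3 a (1 - a - b) b (a + c - 1) (3 - a - b - c - d) (b + d - 1) c (1 - c - d) d"
    using inv3_param[OF assms(1)] by blast
  obtain a' b' c' d' where N: "N = mat3 a' (1 - a' - b') b' (a' + c' - 1) (3 - a' - b' - c' - d') (b' + d' - 1) c' (1 - c' - d') d'"
    using inv3_param[OF assms(2)] by blast
  show ?thesis unfolding M N mat3_mult rho_def mat3_nth mat2_mult mat2_eq_iff by (simp add: algebra_simps)
qed

definition RR :: "lpoly^3^3 \<Rightarrow> int^2^2" where "RR A = rho (spec_m1 A)"

lemma inv3_gens: "g \<in> {bs1, bs2, bs1inv, bs2inv} \<Longrightarrow> inv3 (spec_m1 g)"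
  by (auto simp: spec_gens inv3_def)

lemma inv3_one: "inv3 (mat 1)" by (simp add: mat3_one inv3_def)

lemma inv3_Bu: "A \<in> Bu \<Longrightarrow> inv3 (spec_m1 A)"
  by (induction A rule: Bu.induct) (simp_all add: spec_one inv3_one spec_mult inv3_mult inv3_gens)

lemma RR_gen: "g \<in> {bs1, bs2, bs1inv, bs2inv} \<Longrightarrow> A \<in> Bu \<Longrightarrow> RR (g ** A) = RR g ** RR A"
  unfolding RR_def by (simp add: spec_mult rho_mult inv3_gens inv3_Bu)

lemma RR_one: "RR (mat 1) = mat 1"
  unfolding RR_def spec_one by (simp add: mat3_one rho_def mat2_one)

lemma RR_mult: "A \<in> Bu \<Longrightarrow> B \<in> Bu \<Longrightarrow> RR (A ** B) = RR A ** RR B"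
proof (induction A rule: Bu.induct)
  case Bu_one then show ?case by (simp add: RR_one)
next
  case (Bu_mult A g)
  have "RR (g ** A ** B) = RR (g ** (A ** B))" by (simp add: mma)
  also have "... = RR g ** RR (A ** B)" using Bu_mult by (simp add: RR_gen Bu_mul)
  also have "... = RR (g ** A) ** RR B" using Bu_mult by (simp add: RR_gen mma)
  finally show ?case .
qed

lemma RR_gens: "RR bs1 = mat2 1 (-1) 0 1" "RR bs2 = mat2 1 0 1 1"
  "RR bs1inv = mat2 1 1 0 1" "RR bs2inv = mat2 1 0 (-1) 1"
  by (simp_all add: RR_def spec_gens rho_def)

lemma gens_Bu: "bs1 \<in> Bu" "bs2 \<in> Bu" "bs1inv \<in> Bu" "bs2inv \<in> Bu" by (simp_all add: Bu_gen)

lemma RR_uu: "RR uu = mat2 0 (-1) 1 0" "RR vv = mat2 0 (-1) 1 1" "RR vi = mat2 1 1 (-1) 0"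
  by (simp_all add: uu_def vv_def vi_def RR_mult Bu_mul gens_Bu RR_gens mat2_mult)

lemma RR_D: "RR bDelta = mat2 (-1) 0 0 (-1)"
  by (simp add: Delta_uu RR_mult uu_Bu RR_uu mat2_mult)

lemma RR_Dinv: "RR bDelta_inv = mat2 (-1) 0 0 (-1)"
proof -
  have "RR bDelta_inv ** RR bDelta = mat 1" using RR_mult[OF D_Bu(2) D_Bu(1)] by (simp add: RR_one)
  then have "RR bDelta_inv ** mat2 (-1) 0 0 (-1) = mat2 1 0 0 1" by (simp add: RR_D mat2_one)
  moreover obtain p q r t where X: "RR bDelta_inv = mat2 p q r t" using mat2_expand by blast
  ultimately show ?thesis by (simp add: mat2_mult mat2_eq_iff)
qed

lemma RR_Dpow: "RR (bDelta_pow k) = mat2 1 0 0 1 \<or> RR (bDelta_pow k) = mat2 (-1) 0 0 (-1)"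
proof (induction k rule: int_induct[where k=0])
  case base then show ?case by (simp add: Dpow0 RR_one mat2_one)
next
  case (step1 i) then show ?case by (auto simp: Dpow_succ RR_mult D_Bu Dpow_Bu RR_D mat2_mult)
next
  case (step2 i) then show ?case by (auto simp: Dpow_pred RR_mult D_Bu Dpow_Bu RR_Dinv mat2_mult)
qed



fun lR :: "letter \<Rightarrow> int^2^2" where
  "lR LU = mat2 0 (-1) 1 0" | "lR LV = mat2 0 (-1) 1 1" | "lR LVi = mat2 1 1 (-1) 0"

fun evR :: "letter list \<Rightarrow> int^2^2" where
  "evR [] = mat2 1 0 0 1" | "evR (l # w) = lR l ** evR w"

lemma RR_lm: "RR (lm l) = lR l" by (cases l) (simp_all add: RR_uu)

lemma RR_ev: "RR (ev w) = evR w"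
  by (induction w) (simp_all add: RR_one mat2_one RR_mult lm_Bu ev_Bu RR_lm)

definition Xb :: "bool \<Rightarrow> int^2^2" where "Xb b = (if b then mat2 0 (-1) 1 0 else mat2 1 0 0 1)"

definition QA :: "letter list \<Rightarrow> bool" where
  "QA w \<longleftrightarrow> (\<exists>p q r t b. 1 \<le> p \<and> 0 \<le> q \<and> 0 \<le> r \<and> 1 \<le> t \<and>
     (evR w = mat2 p q r t ** Xb b \<or> evR w = - (mat2 p q r t ** Xb b)) \<and>
     (w = [] \<longrightarrow> \<not> b \<and> p = 1 \<and> q = 0 \<and> r = 0 \<and> t = 1) \<and>
     (w \<noteq> [] \<and> \<not> b \<longrightarrow> p + q + r + t \<ge> 3))"

lemma QA_step:
  assumes "QA w" "w = [] \<or> hd w = LU" "e \<noteq> LU"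
  shows "QA (LU # e # w)"
proof -
  obtain p q r t b where H: "1 \<le> p" "0 \<le> q" "0 \<le> r" "1 \<le> t"
     "evR w = mat2 p q r t ** Xb b \<or> evR w = - (mat2 p q r t ** Xb b)"
    using assms(1) unfolding QA_def by blast
  show ?thesis
  proof (cases e)
    case LU then show ?thesis using assms by simp
  next
    case LV
    show ?thesis unfolding QA_def
      apply (rule exI[of _ "p + r"], rule exI[of _ "q + t"], rule exI[of _ r], rule exI[of _ t], rule exI[of _ b])
      using H LV by (cases b) (auto simp: Xb_def mat2_mult mat2_uminus mat2_eq_iff algebra_simps)
  next
    case LVi
    show ?thesis unfolding QA_def
      apply (rule exI[of _ p], rule exI[of _ q], rule exI[of _ "p + r"], rule exI[of _ "q + t"], rule exI[of _ b])
      using H LVi by (cases b) (auto simp: Xb_def mat2_mult mat2_uminus mat2_eq_iff algebra_simps)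
  qed
qed

lemma QA_all: "red w \<Longrightarrow> (w = [] \<or> hd w = LU) \<Longrightarrow> QA w"
proof (induction "length w" arbitrary: w rule: less_induct)
  case less
  show ?case
  proof (cases w)
    case Nil then show ?thesis unfolding QA_def
      by (intro exI[of _ 1] exI[of _ 0] exI[of _ False]) (simp add: Xb_def mat2_mult)
  next
    case (Cons x w1)
    then have x: "x = LU" using less.prems by simp
    show ?thesis
    proof (cases w1)
      case Nil then show ?thesis unfolding QA_def using Cons x
        by (intro exI[of _ 1] exI[of _ 0] exI[of _ True]) (simp add: Xb_def mat2_mult)
    next
      case (Cons e w2)
      have e: "e \<noteq> LU" "red (e # w2)" using less.prems Cons `w = x # w1` x by auto
      have r2: "red w2" using e(2) red_tl by blast
      have h2: "w2 = [] \<or> hd w2 = LU" using e by (cases w2) auto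
      have "QA w2" using less.hyps[of w2] r2 h2 `w = x # w1` Cons by simp
      then show ?thesis using QA_step[OF _ h2 e(1)] `w = x # w1` Cons x by simp
    qed
  qed
qed

lemma evR_nontriv: assumes "red w" "w \<noteq> []"
  shows "evR w \<noteq> mat2 1 0 0 1 \<and> evR w \<noteq> mat2 (-1) 0 0 (-1)"
proof -
  obtain x w1 where w: "w = x # w1" using assms(2) by (cases w) auto
  show ?thesis
  proof (cases "x = LU")
    case True
    then have "QA w" using QA_all assms w by simp
    then obtain p q r t b where H: "1 \<le> p" "0 \<le> q" "0 \<le> r" "1 \<le> t"
       "evR w = mat2 p q r t ** Xb b \<or> evR w = - (mat2 p q r t ** Xb b)"
       "\<not> b \<longrightarrow> p + q + r + t \<ge> 3"
      unfolding QA_def using assms(2) by blast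
    then show ?thesis by (cases b) (auto simp: Xb_def mat2_mult mat2_uminus mat2_eq_iff)
  next
    case False
    have r1: "red w1" using assms w red_tl by blast
    have h1: "w1 = [] \<or> hd w1 = LU" using assms w False by (cases w1) auto
    have "QA w1" using QA_all r1 h1 by simp
    then obtain p q r t b where H: "1 \<le> p" "0 \<le> q" "0 \<le> r" "1 \<le> t"
       "evR w1 = mat2 p q r t ** Xb b \<or> evR w1 = - (mat2 p q r t ** Xb b)"
      unfolding QA_def by blast
    show ?thesis
    proof (cases x)
      case LU then show ?thesis using False by simp
    next
      case LV then show ?thesis using H w by (cases b) (auto simp: Xb_def mat2_mult mat2_uminus mat2_eq_iff)
    next
      case LVi then show ?thesis using H w by (cases b) (auto simp: Xb_def mat2_mult mat2_uminus mat2_eq_iff)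
    qed
  qed
qed

lemma kernel: assumes "A \<in> Bu" "RR A = mat2 1 0 0 1 \<or> RR A = mat2 (-1) 0 0 (-1)"
  shows "\<exists>k. A = bDelta_pow k"
proof -
  obtain j w where jw: "red w" "A = bDelta_pow j ** ev w" using NFP_Bu[OF assms(1)] unfolding NFP_def by blast
  have RA: "RR A = RR (bDelta_pow j) ** evR w" using jw(2) by (simp add: RR_mult Dpow_Bu ev_Bu RR_ev)
  obtain p q r t where E: "evR w = mat2 p q r t" using mat2_expand by blast
  have "evR w = mat2 1 0 0 1 \<or> evR w = mat2 (-1) 0 0 (-1)"
    using RR_Dpow[of j] assms(2) RA unfolding E by (auto simp: mat2_mult mat2_eq_iff)
  then have "w = []" using evR_nontriv[OF jw(1)] by blast
  then show ?thesis using jw(2) by auto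
qed



lemma T_pow: "\<exists>A\<in>Bu. RR A = mat2 1 b 0 1"
proof (induction b rule: int_induct[where k=0])
  case base then show ?case by (intro bexI[of _ "mat 1"]) (simp_all add: RR_one mat2_one Bu_one)
next
  case (step1 i)
  then obtain A where A: "A \<in> Bu" "RR A = mat2 1 i 0 1" by blast
  have "bs1inv ** A \<in> Bu" using A(1) by (simp add: Bu_mul gens_Bu)
  moreover have "RR (bs1inv ** A) = mat2 1 (i + 1) 0 1" using A by (simp add: RR_gen RR_gens mat2_mult)
  ultimately show ?case by blast
next
  case (step2 i)
  then obtain A where A: "A \<in> Bu" "RR A = mat2 1 i 0 1" by blast
  have "bs1 ** A \<in> Bu" using A(1) by (simp add: Bu_mul gens_Bu)
  moreover have "RR (bs1 ** A) = mat2 1 (i - 1) 0 1" using A by (simp add: RR_gen RR_gens mat2_mult)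
  ultimately show ?case by blast
qed

lemma surj_c0: assumes "a * d = 1" shows "\<exists>A\<in>Bu. RR A = mat2 a b 0 d"
proof -
  from assms have "a = 1 \<and> d = 1 \<or> a = -1 \<and> d = -1" by (simp add: zmult_eq_1_iff)
  then show ?thesis
  proof
    assume "a = 1 \<and> d = 1" then show ?thesis using T_pow[of b] by simp
  next
    assume ad: "a = -1 \<and> d = -1"
    obtain A where A: "A \<in> Bu" "RR A = mat2 1 (-b) 0 1" using T_pow[of "-b"] by blast
    have "bDelta ** A \<in> Bu" using A(1) D_Bu by (simp add: Bu_mul)
    moreover have "RR (bDelta ** A) = mat2 a b 0 d" using A ad by (simp add: RR_mult D_Bu RR_D mat2_mult)
    ultimately show ?thesis by blast
  qed
qed

lemma surj_a0: assumes "- (b * c) = 1" shows "\<exists>A\<in>Bu. RR A = mat2 0 b c d"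
proof -
  obtain A where A: "A \<in> Bu" "RR A = mat2 (-c) (-d) 0 b" using surj_c0[of "-c" b "-d"] assms by (auto simp: algebra_simps)
  have "uu ** (uu ** (uu ** A)) \<in> Bu" using A(1) uu_Bu by (simp add: Bu_mul)
  moreover have "RR (uu ** (uu ** (uu ** A))) = mat2 0 b c d"
    using A by (simp add: RR_mult uu_Bu Bu_mul RR_uu mat2_mult)
  ultimately show ?thesis by blast
qed

lemma surj_step:
  assumes "\<exists>A\<in>Bu. RR A = N'" "g \<in> {bs1, bs2, bs1inv, bs2inv}" "RR g ** N' = N"
  shows "\<exists>A\<in>Bu. RR A = N"
proof -
  obtain A where A: "A \<in> Bu" "RR A = N'" using assms(1) by blast
  have "g ** A \<in> Bu" using A(1) assms(2) Bu_mul Bu_gen by blast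
  moreover have "RR (g ** A) = N" using A assms by (simp add: RR_gen)
  ultimately show ?thesis by blast
qed

lemma surj_mat2: "a * d - b * c = 1 \<Longrightarrow> \<exists>A\<in>Bu. RR A = mat2 a b c d"
proof (induction "nat (\<bar>a\<bar> + \<bar>c\<bar>)" arbitrary: a b c d rule: less_induct)
  case less
  show ?case
  proof (cases "c = 0")
    case True then show ?thesis using surj_c0 less.prems by simp
  next
    case c0: False
    show ?thesis
    proof (cases "a = 0")
      case True then show ?thesis using surj_a0 less.prems by simp
    next
      case a0: False
      show ?thesis
      proof (cases "\<bar>c\<bar> \<le> \<bar>a\<bar>")
        case True
        show ?thesis
        proof (cases "(a > 0) = (c > 0)")
          case True
          have m: "nat (\<bar>a - c\<bar> + \<bar>c\<bar>) < nat (\<bar>a\<bar> + \<bar>c\<bar>)" using `\<bar>c\<bar> \<le> \<bar>a\<bar>` True a0 c0 by (auto simp: abs_if)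
          have "\<exists>A\<in>Bu. RR A = mat2 (a - c) (b - d) c d"
            using less.hyps[OF m] less.prems by (simp add: algebra_simps)
          then show ?thesis by (rule surj_step[where g=bs1inv]) (simp_all add: RR_gens mat2_mult)
        next
          case False
          have m: "nat (\<bar>a + c\<bar> + \<bar>c\<bar>) < nat (\<bar>a\<bar> + \<bar>c\<bar>)" using `\<bar>c\<bar> \<le> \<bar>a\<bar>` False a0 c0 by (auto simp: abs_if)
          have "\<exists>A\<in>Bu. RR A = mat2 (a + c) (b + d) c d"
            using less.hyps[OF m] less.prems by (simp add: algebra_simps)
          then show ?thesis by (rule surj_step[where g=bs1]) (simp_all add: RR_gens mat2_mult)
        qed
      next
        case False
        show ?thesis
        proof (cases "(a > 0) = (c > 0)")
          case True
          have m: "nat (\<bar>a\<bar> + \<bar>c - a\<bar>) < nat (\<bar>a\<bar> + \<bar>c\<bar>)" using `\<not> \<bar>c\<bar> \<le> \<bar>a\<bar>` True a0 c0 by (auto simp: abs_if)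
          have "\<exists>A\<in>Bu. RR A = mat2 a b (c - a) (d - b)"
            using less.hyps[OF m] less.prems by (simp add: algebra_simps)
          then show ?thesis by (rule surj_step[where g=bs2]) (simp_all add: RR_gens mat2_mult)
        next
          case False
          have m: "nat (\<bar>a\<bar> + \<bar>c + a\<bar>) < nat (\<bar>a\<bar> + \<bar>c\<bar>)" using `\<not> \<bar>c\<bar> \<le> \<bar>a\<bar>` False a0 c0 by (auto simp: abs_if)
          have "\<exists>A\<in>Bu. RR A = mat2 a b (c + a) (d + b)"
            using less.hyps[OF m] less.prems by (simp add: algebra_simps)
          then show ?thesis by (rule surj_step[where g=bs2inv]) (simp_all add: RR_gens mat2_mult)
        qed
      qed
    qed
  qed
qed

lemma surj: "det (N::int^2^2) = 1 \<Longrightarrow> \<exists>A\<in>Bu. RR A = N"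
  using surj_mat2[of "N$1$1" "N$2$2" "N$1$2" "N$2$1"] mat2_expand[of N] by (simp add: det_2)

lemma det_RR: "A \<in> Bu \<Longrightarrow> det (RR A) = 1"
proof (induction A rule: Bu.induct)
  case Bu_one then show ?case by (simp add: RR_one)
next
  case (Bu_mult A g)
  then have "det (RR g) = 1" by (auto simp: RR_gens mat2_det)
  then show ?case using Bu_mult by (simp add: RR_gen det_mul)
qed



lemma of_int_fract: "(of_int x :: 'a::idom fract) = Fract (of_int x) 1"
proof (cases x rule: int_cases)
  case (nonneg n) then show ?thesis by (simp add: of_nat_fract)
next
  case (neg n)
  have "(of_int x :: 'a fract) = - of_nat (Suc n)" using neg by simp
  also have "... = Fract (- of_nat (Suc n)) 1" by (simp add: of_nat_fract del: of_nat_Suc)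
  finally show ?thesis using neg by simp
qed

lemma of_int_fract0: "(of_int x :: rat poly fract) = 0 \<Longrightarrow> x = 0"
proof -
  assume "(of_int x :: rat poly fract) = 0"
  then have "Fract (of_int x :: rat poly) 1 = Fract 0 1" by (simp add: of_int_fract Zero_fract_def)
  then have "(of_int x :: rat poly) = 0" by (simp add: eq_fract)
  then show "x = 0" by simp
qed

lemma pe_I: assumes "proj_eq M (mat 1)" "det M = 1"
  shows "M = mat2 1 0 0 1 \<or> M = mat2 (-1) 0 0 (-1)"
proof -
  obtain c :: "rat poly fract" where H: "\<And>i j. of_int (M $ i $ j) = c * of_int (mat 1 $ i $ j)"
    using assms(1) unfolding proj_eq_def by blast
  have m1: "(mat 1 :: int^2^2) $ i $ j = (if i = j then 1 else 0)" for i j by (simp add: mat_def)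
  have "M$1$2 = 0" using H[of 1 2] by (simp add: m1 of_int_fract0)
  moreover have "M$2$1 = 0" using H[of 2 1] by (simp add: m1 of_int_fract0)
  moreover have "(of_int (M$1$1 - M$2$2) :: rat poly fract) = 0" using H[of 1 1] H[of 2 2] by (simp add: m1)
  then have "M$1$1 = M$2$2" using of_int_fract0 by fastforce
  ultimately have "M = mat2 (M$1$1) 0 0 (M$1$1)" "M$1$1 * M$1$1 = 1"
    using mat2_expand[of M] assms(2) by (simp_all add: det_2)
  then show ?thesis by (auto simp: zmult_eq_1_iff)
qed

lemma I_pe: "M = mat2 1 0 0 1 \<or> M = mat2 (-1) 0 0 (-1) \<Longrightarrow> proj_eq M (mat 1)"
  unfolding proj_eq_def
  by (elim disjE; rule exI[of _ "of_int (M$1$1)"]) (auto simp: forall_2 mat_def)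

lemma pe_refl: "proj_eq M M" unfolding proj_eq_def by (intro exI[of _ 1]) simp

lemma center_RR: assumes "A \<in> center_Bu" shows "RR A = mat2 1 0 0 1 \<or> RR A = mat2 (-1) 0 0 (-1)"
proof -
  have A: "A \<in> Bu" "A ** bs1 = bs1 ** A" "A ** bs2 = bs2 ** A"
    using assms gens_Bu unfolding center_Bu_def by auto
  have c1: "RR A ** RR bs1 = RR bs1 ** RR A" using A by (metis RR_mult gens_Bu(1))
  have c2: "RR A ** RR bs2 = RR bs2 ** RR A" using A by (metis RR_mult gens_Bu(2))
  obtain p q r t where E: "RR A = mat2 p q r t" using mat2_expand by blast
  have d: "p * t - q * r = 1" using det_RR[OF A(1)] E by (simp add: mat2_det)
  have "r = 0" "p = t" "q = 0" using c1 c2 unfolding E RR_gens by (simp_all add: mat2_mult mat2_eq_iff)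
  then show ?thesis using d E by (auto simp: zmult_eq_1_iff)
qed

lemma Dpow_center: "bDelta_pow k \<in> center_Bu"
  unfolding center_Bu_def using Dpow_Bu Dpow_comm by auto

lemma det_gens: "det bs1 = - tL" "det bs2 = - tL" "det bs1inv = - tLinv" "det bs2inv = - tLinv"
  by (simp_all add: gens_mat3 det_3)

lemma tL_pow: "tL = fls_X_intpow 1" "tLinv = fls_X_intpow (-1)"
  by (simp_all add: tL_def tLinv_def fls_X_conv_shift_1 fls_X_inv_conv_shift_1)

lemma sh_mult: "fls_shift a (1::int fls) * fls_shift b 1 = fls_shift (a + b) 1"
  using fls_X_intpow_times_fls_X_intpow[of "-a" "-b"] by (simp add: add.commute)

lemma det_D: "det bDelta = fls_X_intpow 6" "det bDelta_inv = fls_X_intpow (-6)"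
  by (simp_all add: bDelta_def bDelta_inv_def det_mul det_gens tL_pow sh_mult)

lemma det_Dpow: "det (bDelta_pow k) = fls_X_intpow (6 * k)"
proof (induction k rule: int_induct[where k=0])
  case base then show ?case by (simp add: Dpow0)
next
  case (step1 i)
  have "det (bDelta_pow (i + 1)) = det bDelta * det (bDelta_pow i)" by (simp only: Dpow_succ det_mul)
  then show ?case using step1(2) by (simp add: det_D sh_mult algebra_simps)
next
  case (step2 i)
  have "det (bDelta_pow (i - 1)) = det bDelta_inv * det (bDelta_pow i)" by (simp only: Dpow_pred det_mul)
  then show ?case using step2(2) by (simp add: det_D sh_mult algebra_simps)
qed

lemma Dpow_inj: "inj bDelta_pow"
proof (rule injI)
  fix m n assume "bDelta_pow m = bDelta_pow n"
  then have "fls_subdegree (fls_X_intpow (6 * m) :: int fls) = fls_subdegree (fls_X_intpow (6 * n) :: int fls)"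
    using det_Dpow by metis
  then show "m = n" by simp
qed

theorem lemma3p9:
  shows "(\<forall>A \<in> Bu. rhobar_in_PSL (rho (spec_m1 A)))
    \<and> (\<forall>N :: int^2^2. det N = 1 \<longrightarrow> (\<exists>A \<in> Bu. proj_eq (rho (spec_m1 A)) N))
    \<and> {A \<in> Bu. proj_eq (rho (spec_m1 A)) (mat 1)} = center_Bu
    \<and> center_Bu = range bDelta_pow
    \<and> inj bDelta_pow"
proof (intro conjI)
  show "\<forall>A \<in> Bu. rhobar_in_PSL (rho (spec_m1 A))"
    unfolding RR_def[symmetric] rhobar_in_PSL_def using det_RR pe_refl by blast
  show "\<forall>N :: int^2^2. det N = 1 \<longrightarrow> (\<exists>A \<in> Bu. proj_eq (rho (spec_m1 A)) N)"
    unfolding RR_def[symmetric] using surj pe_refl by metis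
  show "{A \<in> Bu. proj_eq (rho (spec_m1 A)) (mat 1)} = center_Bu"
    unfolding RR_def[symmetric]
  proof (intro set_eqI iffI)
    fix A assume "A \<in> {A \<in> Bu. proj_eq (RR A) (mat 1)}"
    then have "A \<in> Bu" "proj_eq (RR A) (mat 1)" by auto
    then obtain k where "A = bDelta_pow k" using kernel pe_I det_RR by blast
    then show "A \<in> center_Bu" using Dpow_center by simp
  next
    fix A assume "A \<in> center_Bu"
    then show "A \<in> {A \<in> Bu. proj_eq (RR A) (mat 1)}"
      using center_RR I_pe unfolding center_Bu_def by auto
  qed
  show "center_Bu = range bDelta_pow"
  proof (intro set_eqI iffI)
    fix A assume "A \<in> center_Bu"
    then obtain k where "A = bDelta_pow k" using kernel center_RR unfolding center_Bu_def by blast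
    then show "A \<in> range bDelta_pow" by simp
  next
    fix A assume "A \<in> range bDelta_pow"
    then show "A \<in> center_Bu" using Dpow_center by auto
  qed
  show "inj bDelta_pow" by (rule Dpow_inj)
qed



end
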